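(* For any $k$-algebra $A$, the map $\mathrm{Irr}(A)\to\mathrm{Irr}(A_{\mathbb{C}})$, $V\mapsto V_{\mathbb{C}}$, is a bijection.
   Context: $k=\mathcal{O}(X)$ is the coordinate algebra of a complex affine variety $X$. A $k$-algebra is a (not necessarily unital or commutative) $\mathbb{C}$-algebra $A$ which is a unital left $k$-module with $\lambda(\omega a)=\omega(\lambda a)=(\lambda\omega)a$ and $\omega(a_1a_2)=(\omega a_1)a_2=a_1(\omega a_2)$. An $A$-module is a complex vector space $V$ with algebra morphisms $A\to\mathrm{Hom}_{\mathbb{C}}(V,V)$ and a unital $k\to\mathrm{Hom}_{\mathbb{C}}(V,V)$ with $(\omega a)v=\omega(av)=a(\omega v)$; irreducible means $AV\neq 0$ and no subspace $0\neq W\neq V$ stable under $A$ and $k$; two $A$-modules are equivalent if there is a linear isomorphism intertwining both the $A$- and $k$-actions. $\mathrm{Irr}(A)$ is the set of equivalence classes of irreducible $A$-modules. $A_{\mathbb{C}}$ is $A$ with the $k$-action forgotten; irreducibility and equivalence of $A_{\mathbb{C}}$-modules are defined the same way using only the action of $A_{\mathbb{C}}$, and $\mathrm{Irr}(A_{\mathbb{C}})$ is the set of equivalence classes of irreducible $A_{\mathbb{C}}$-modules. $V_{\mathbb{C}}$ is the $A$-module $V$ with the $k$-action forgotten. *)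

theory Defs
  imports Complex_Main
begin

text \<open>A complex algebra: a ring (class ring is non-unital) together with a complex
  scalar multiplication making it a complex vector space, bilinear multiplication.\<close>
definition complex_algebra :: "(complex \<Rightarrow> 'a::ring \<Rightarrow> 'a) \<Rightarrow> bool" where
  "complex_algebra s \<longleftrightarrow> vector_space s \<and>
     (\<forall>c x y. s c (x * y) = s c x * y \<and> s c (x * y) = x * s c y)"

inductive_set gen_subalg :: "(complex \<Rightarrow> 'k::comm_ring_1 \<Rightarrow> 'k) \<Rightarrow> 'k set \<Rightarrow> 'k set"
  for s :: "complex \<Rightarrow> 'k \<Rightarrow> 'k" and S :: "'k set" where
  gen: "x \<in> S \<Longrightarrow> x \<in> gen_subalg s S"
| one: "1 \<in> gen_subalg s S"
| add: "x \<in> gen_subalg s S \<Longrightarrow> y \<in> gen_subalg s S \<Longrightarrow> x + y \<in> gen_subalg s S"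
| mult: "x \<in> gen_subalg s S \<Longrightarrow> y \<in> gen_subalg s S \<Longrightarrow> x * y \<in> gen_subalg s S"
| scale: "x \<in> gen_subalg s S \<Longrightarrow> s c x \<in> gen_subalg s S"

text \<open>Coordinate algebras of complex affine varieties = finitely generated reduced
  commutative unital complex algebras.\<close>
definition coordinate_algebra :: "(complex \<Rightarrow> 'k::comm_ring_1 \<Rightarrow> 'k) \<Rightarrow> bool" where
  "coordinate_algebra s \<longleftrightarrow> complex_algebra s \<and>
     (\<exists>S. finite S \<and> gen_subalg s S = UNIV) \<and>
     (\<forall>(x::'k) (n::nat). x ^ n = 0 \<longrightarrow> x = 0)"

definition k_algebra ::
  "(complex \<Rightarrow> 'k::comm_ring_1 \<Rightarrow> 'k) \<Rightarrow> (complex \<Rightarrow> 'a::ring \<Rightarrow> 'a) \<Rightarrow> ('k \<Rightarrow> 'a \<Rightarrow> 'a) \<Rightarrow> bool" where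
  "k_algebra sK sA act \<longleftrightarrow> complex_algebra sA \<and> module act \<and>
     (\<forall>c w a. sA c (act w a) = act w (sA c a) \<and> sA c (act w a) = act (sK c w) a) \<and>
     (\<forall>w a1 a2. act w (a1 * a2) = act w a1 * a2 \<and> act w (a1 * a2) = a1 * act w a2)"

definition AC_module ::
  "(complex \<Rightarrow> 'a::ring \<Rightarrow> 'a) \<Rightarrow> (complex \<Rightarrow> 'v::ab_group_add \<Rightarrow> 'v) \<Rightarrow> ('a \<Rightarrow> 'v \<Rightarrow> 'v) \<Rightarrow> bool" where
  "AC_module sA sV rho \<longleftrightarrow> vector_space sV \<and>
     (\<forall>a. Vector_Spaces.linear sV sV (rho a)) \<and>
     (\<forall>a b v. rho (a + b) v = rho a v + rho b v) \<and>
     (\<forall>c a v. rho (sA c a) v = sV c (rho a v)) \<and>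
     (\<forall>a b v. rho (a * b) v = rho a (rho b v))"

definition A_module ::
  "(complex \<Rightarrow> 'k::comm_ring_1 \<Rightarrow> 'k) \<Rightarrow> (complex \<Rightarrow> 'a::ring \<Rightarrow> 'a) \<Rightarrow> ('k \<Rightarrow> 'a \<Rightarrow> 'a) \<Rightarrow>
   (complex \<Rightarrow> 'v::ab_group_add \<Rightarrow> 'v) \<Rightarrow> ('a \<Rightarrow> 'v \<Rightarrow> 'v) \<Rightarrow> ('k \<Rightarrow> 'v \<Rightarrow> 'v) \<Rightarrow> bool" where
  "A_module sK sA act sV rho kap \<longleftrightarrow> AC_module sA sV rho \<and>
     (\<forall>w. Vector_Spaces.linear sV sV (kap w)) \<and>
     (\<forall>w u v. kap (w + u) v = kap w v + kap u v) \<and>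
     (\<forall>c w v. kap (sK c w) v = sV c (kap w v)) \<and>
     (\<forall>w u v. kap (w * u) v = kap w (kap u v)) \<and>
     (\<forall>v. kap 1 v = v) \<and>
     (\<forall>w a v. rho (act w a) v = kap w (rho a v) \<and> rho (act w a) v = rho a (kap w v))"

definition irreducible_AC ::
  "(complex \<Rightarrow> 'a::ring \<Rightarrow> 'a) \<Rightarrow> (complex \<Rightarrow> 'v::ab_group_add \<Rightarrow> 'v) \<Rightarrow> ('a \<Rightarrow> 'v \<Rightarrow> 'v) \<Rightarrow> bool" where
  "irreducible_AC sA sV rho \<longleftrightarrow> AC_module sA sV rho \<and>
     (\<exists>a v. rho a v \<noteq> 0) \<and>
     \<not> (\<exists>W. module.subspace sV W \<and> W \<noteq> {0} \<and> W \<noteq> UNIV \<and>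
            (\<forall>a. \<forall>v\<in>W. rho a v \<in> W))"

definition irreducible_A ::
  "(complex \<Rightarrow> 'k::comm_ring_1 \<Rightarrow> 'k) \<Rightarrow> (complex \<Rightarrow> 'a::ring \<Rightarrow> 'a) \<Rightarrow> ('k \<Rightarrow> 'a \<Rightarrow> 'a) \<Rightarrow>
   (complex \<Rightarrow> 'v::ab_group_add \<Rightarrow> 'v) \<Rightarrow> ('a \<Rightarrow> 'v \<Rightarrow> 'v) \<Rightarrow> ('k \<Rightarrow> 'v \<Rightarrow> 'v) \<Rightarrow> bool" where
  "irreducible_A sK sA act sV rho kap \<longleftrightarrow> A_module sK sA act sV rho kap \<and>
     (\<exists>a v. rho a v \<noteq> 0) \<and>
     \<not> (\<exists>W. module.subspace sV W \<and> W \<noteq> {0} \<and> W \<noteq> UNIV \<and>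
            (\<forall>a. \<forall>v\<in>W. rho a v \<in> W) \<and> (\<forall>w. \<forall>v\<in>W. kap w v \<in> W))"

definition equiv_AC ::
  "(complex \<Rightarrow> 'v::ab_group_add \<Rightarrow> 'v) \<Rightarrow> ('a \<Rightarrow> 'v \<Rightarrow> 'v) \<Rightarrow>
   (complex \<Rightarrow> 'w::ab_group_add \<Rightarrow> 'w) \<Rightarrow> ('a \<Rightarrow> 'w \<Rightarrow> 'w) \<Rightarrow> bool" where
  "equiv_AC sV rhoV sW rhoW \<longleftrightarrow>
     (\<exists>T. Vector_Spaces.linear sV sW T \<and> bij T \<and> (\<forall>a v. T (rhoV a v) = rhoW a (T v)))"

definition equiv_A ::
  "(complex \<Rightarrow> 'v::ab_group_add \<Rightarrow> 'v) \<Rightarrow> ('a \<Rightarrow> 'v \<Rightarrow> 'v) \<Rightarrow> ('k \<Rightarrow> 'v \<Rightarrow> 'v) \<Rightarrow>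
   (complex \<Rightarrow> 'w::ab_group_add \<Rightarrow> 'w) \<Rightarrow> ('a \<Rightarrow> 'w \<Rightarrow> 'w) \<Rightarrow> ('k \<Rightarrow> 'w \<Rightarrow> 'w) \<Rightarrow> bool" where
  "equiv_A sV rhoV kapV sW rhoW kapW \<longleftrightarrow>
     (\<exists>T. Vector_Spaces.linear sV sW T \<and> bij T \<and> (\<forall>a v. T (rhoV a v) = rhoW a (T v)) \<and>
          (\<forall>w v. T (kapV w v) = kapW w (T v)))"

end

theory Submission
  imports Defs
begin

definition Gs :: "('a \<Rightarrow> 'v \<Rightarrow> 'w) \<Rightarrow> ('a \<times> 'v) list \<Rightarrow> 'w::ab_group_add" where
  "Gs rho xs = (\<Sum>p\<leftarrow>xs. rho (fst p) (snd p))"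

definition mapA :: "('a \<Rightarrow> 'a) \<Rightarrow> ('a \<times> 'v) list \<Rightarrow> ('a \<times> 'v) list" where
  "mapA f xs = map (\<lambda>p. (f (fst p), snd p)) xs"

lemma Gs_simps[simp]: "Gs rho [] = 0" "Gs rho (p # xs) = rho (fst p) (snd p) + Gs rho xs"
  "Gs rho (xs @ ys) = Gs rho xs + Gs rho ys"
  by (simp_all add: Gs_def)

lemma mapA_simps[simp]: "mapA f [] = []" "mapA f (p # xs) = (f (fst p), snd p) # mapA f xs"
  "mapA f (xs @ ys) = mapA f xs @ mapA f ys" "snd ` set (mapA f xs) = snd ` set xs"
  by (auto simp: mapA_def image_image)

lemma mapA_mapA[simp]: "mapA f (mapA g xs) = mapA (\<lambda>a. f (g a)) xs"
  by (simp add: mapA_def)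

lemma mapA_ext: "(\<And>a. f a = g a) \<Longrightarrow> mapA f xs = mapA g xs"
  by (simp add: mapA_def)

lemma mapA_id: "mapA (\<lambda>a. a) xs = xs"
  by (simp add: mapA_def)

lemma addf_Gs:
  fixes f :: "'v::ab_group_add \<Rightarrow> 'w::ab_group_add"
  assumes "\<And>x y. f (x + y) = f x + f y"
  shows "f (Gs rho xs) = Gs (\<lambda>a x. f (rho a x)) xs"
proof -
  have f0: "f 0 = 0" using assms[of 0 0] by simp
  show ?thesis by (induction xs) (simp_all add: f0 assms)
qed

lemma Gs_mapA: "Gs rho (mapA f xs) = Gs (\<lambda>a x. rho (f a) x) xs"
  by (induction xs) simp_all

lemma Gs_eq: "(\<And>a x. r a x = r' a x) \<Longrightarrow> Gs r xs = Gs r' xs"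
  by (induction xs) simp_all

locale acm =
  fixes sA :: "complex \<Rightarrow> 'a::ring \<Rightarrow> 'a" and sV :: "complex \<Rightarrow> 'v::ab_group_add \<Rightarrow> 'v"
    and rho :: "'a \<Rightarrow> 'v \<Rightarrow> 'v"
  assumes AC: "AC_module sA sV rho"
begin

lemma vs: "vector_space sV" using AC by (simp add: AC_module_def)
lemma ms: "module sV" using vs by (simp add: module_iff_vector_space)
lemma rlin: "Vector_Spaces.linear sV sV (rho a)" using AC by (simp add: AC_module_def)
lemma rv_add: "rho a (x + y) = rho a x + rho a y"
  using rlin[of a] unfolding Vector_Spaces.linear_iff by blast
lemma rv_scale: "rho a (sV c x) = sV c (rho a x)"
  using rlin[of a] unfolding Vector_Spaces.linear_iff by blast
lemma ra_add: "rho (a + b) x = rho a x + rho b x"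
  using AC by (simp add: AC_module_def)
lemma ra_scale: "rho (sA c a) x = sV c (rho a x)"
  using AC by (simp add: AC_module_def)
lemma ra_mult: "rho (a * b) x = rho a (rho b x)"
  using AC by (simp add: AC_module_def)
lemma rv_0: "rho a 0 = 0" using rv_add[of a 0 0] by simp
lemma ra_0: "rho 0 x = 0" using ra_add[of 0 0 x] by simp
lemma ra_minus: "rho (- a) x = - rho a x"
  using ra_add[of a "-a" x] ra_0 by (simp add: eq_neg_iff_add_eq_0 add.commute)
lemma sV_add: "sV c (x + y) = sV c x + sV c y"
  using module.scale_right_distrib[OF ms] .

lemma rho_Gs: "rho c (Gs rho xs) = Gs rho (mapA ((*) c) xs)"
  by (simp add: addf_Gs rv_add Gs_mapA ra_mult)

lemma sV_Gs: "sV c (Gs rho xs) = Gs rho (mapA (sA c) xs)"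
  by (simp add: addf_Gs sV_add Gs_mapA ra_scale)

lemma Gs_minus: "Gs rho (mapA uminus xs) = - Gs rho xs"
  by (induction xs) (simp_all add: ra_minus)

definition Sp :: "'v set \<Rightarrow> 'v set" where
  "Sp X = {v. \<exists>xs. snd ` set xs \<subseteq> X \<and> v = Gs rho xs}"

definition Z :: "'v set" where "Z = {u. \<forall>b. rho b u = 0}"

lemma Sp_subspace: "module.subspace sV (Sp X)"
  unfolding module.subspace_def[OF ms] Sp_def
proof (intro conjI ballI allI)
  show "0 \<in> {v. \<exists>xs. snd ` set xs \<subseteq> X \<and> v = Gs rho xs}"
    by (auto intro!: exI[of _ "[]"])
next
  fix x y assume "x \<in> {v. \<exists>xs. snd ` set xs \<subseteq> X \<and> v = Gs rho xs}"
    "y \<in> {v. \<exists>xs. snd ` set xs \<subseteq> X \<and> v = Gs rho xs}"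
  then obtain xs ys where "snd ` set xs \<subseteq> X" "x = Gs rho xs" "snd ` set ys \<subseteq> X" "y = Gs rho ys"
    by auto
  then show "x + y \<in> {v. \<exists>xs. snd ` set xs \<subseteq> X \<and> v = Gs rho xs}"
    by (intro CollectI exI[of _ "xs @ ys"]) auto
next
  fix c x assume "x \<in> {v. \<exists>xs. snd ` set xs \<subseteq> X \<and> v = Gs rho xs}"
  then obtain xs where "snd ` set xs \<subseteq> X" "x = Gs rho xs" by auto
  then show "sV c x \<in> {v. \<exists>xs. snd ` set xs \<subseteq> X \<and> v = Gs rho xs}"
    by (intro CollectI exI[of _ "mapA (sA c) xs"]) (simp add: sV_Gs)
qed

lemma Sp_stable: "v \<in> Sp X \<Longrightarrow> rho a v \<in> Sp X"
proof -
  assume "v \<in> Sp X"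
  then obtain xs where "snd ` set xs \<subseteq> X" "v = Gs rho xs" unfolding Sp_def by auto
  then show ?thesis unfolding Sp_def
    by (intro CollectI exI[of _ "mapA ((*) a) xs"]) (simp add: rho_Gs)
qed

lemma Sp_contains: "x \<in> X \<Longrightarrow> rho a x \<in> Sp X"
  unfolding Sp_def by (auto intro!: exI[of _ "[(a, x)]"])

lemma Gs_in:
  assumes "module.subspace sV W" "\<forall>a. \<forall>v\<in>W. rho a v \<in> W" "snd ` set xs \<subseteq> W"
  shows "Gs rho xs \<in> W"
  using assms(3)
proof (induction xs)
  case Nil then show ?case using assms(1) by (simp add: module.subspace_def[OF ms])
next
  case (Cons p xs)
  then show ?case using assms(1,2) by (simp add: module.subspace_def[OF ms])
qed

lemma Sp_sub: "module.subspace sV W \<Longrightarrow> \<forall>a. \<forall>v\<in>W. rho a v \<in> W \<Longrightarrow> Sp W \<subseteq> W"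
  unfolding Sp_def using Gs_in by blast

lemma Z_subspace: "module.subspace sV Z"
  unfolding module.subspace_def[OF ms] Z_def by (simp add: rv_add rv_scale rv_0 module.scale_zero_right[OF ms])

lemma Z_stable: "v \<in> Z \<Longrightarrow> rho a v \<in> Z"
  unfolding Z_def by (simp add: rv_0)

lemma irrAC:
  assumes "irreducible_AC sA sV rho"
  shows "Sp UNIV = UNIV" "Z = {0}"
proof -
  obtain a v where av: "rho a v \<noteq> 0" using assms by (auto simp: irreducible_AC_def)
  have no: "\<And>W. module.subspace sV W \<Longrightarrow> (\<forall>a. \<forall>v\<in>W. rho a v \<in> W) \<Longrightarrow> W = {0} \<or> W = UNIV"
    using assms by (auto simp: irreducible_AC_def)
  have "Sp UNIV \<noteq> {0}" using Sp_contains[of v UNIV a] av by auto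
  then show "Sp UNIV = UNIV" using no[OF Sp_subspace] Sp_stable by blast
  have "Z \<noteq> UNIV" using av by (auto simp: Z_def)
  then show "Z = {0}" using no[OF Z_subspace] Z_stable by blast
qed

end


locale am = acm sA sV rho
  for sA :: "complex \<Rightarrow> 'a::ring \<Rightarrow> 'a" and sV :: "complex \<Rightarrow> 'v::ab_group_add \<Rightarrow> 'v"
    and rho :: "'a \<Rightarrow> 'v \<Rightarrow> 'v" +
  fixes sK :: "complex \<Rightarrow> 'k::comm_ring_1 \<Rightarrow> 'k" and act :: "'k \<Rightarrow> 'a \<Rightarrow> 'a"
    and kap :: "'k \<Rightarrow> 'v \<Rightarrow> 'v"
  assumes AM: "A_module sK sA act sV rho kap"
begin

lemma klin: "Vector_Spaces.linear sV sV (kap w)" using AM by (simp add: A_module_def)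
lemma kv_add: "kap w (x + y) = kap w x + kap w y"
  using klin[of w] unfolding Vector_Spaces.linear_iff by blast
lemma kv_scale: "kap w (sV c x) = sV c (kap w x)"
  using klin[of w] unfolding Vector_Spaces.linear_iff by blast
lemma ract1: "rho (act w a) v = kap w (rho a v)" using AM by (simp add: A_module_def)
lemma ract2: "rho (act w a) v = rho a (kap w v)" using AM unfolding A_module_def by blast

lemma kap_Gs: "kap w (Gs rho xs) = Gs rho (mapA (act w) xs)"
  by (simp add: addf_Gs kv_add Gs_mapA ract1)

lemma Sp_kstable: "v \<in> Sp X \<Longrightarrow> kap w v \<in> Sp X"
proof -
  assume "v \<in> Sp X"
  then obtain xs where "snd ` set xs \<subseteq> X" "v = Gs rho xs" unfolding Sp_def by auto
  then show ?thesis unfolding Sp_def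
    by (intro CollectI exI[of _ "mapA (act w) xs"]) (simp add: kap_Gs)
qed

lemma Z_kstable: "v \<in> Z \<Longrightarrow> kap w v \<in> Z"
  unfolding Z_def by (simp add: ract2[symmetric])

lemma irrA:
  assumes "irreducible_A sK sA act sV rho kap"
  shows "Sp UNIV = UNIV" "Z = {0}"
proof -
  obtain a v where av: "rho a v \<noteq> 0" using assms by (auto simp: irreducible_A_def)
  have no: "\<And>W. module.subspace sV W \<Longrightarrow> (\<forall>a. \<forall>v\<in>W. rho a v \<in> W) \<Longrightarrow>
      (\<forall>w. \<forall>v\<in>W. kap w v \<in> W) \<Longrightarrow> W = {0} \<or> W = UNIV"
    using assms by (auto simp: irreducible_A_def)
  have "Sp UNIV \<noteq> {0}" using Sp_contains[of v UNIV a] av by auto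
  then show "Sp UNIV = UNIV" using no[OF Sp_subspace] Sp_stable Sp_kstable by blast
  have "Z \<noteq> UNIV" using av by (auto simp: Z_def)
  then show "Z = {0}" using no[OF Z_subspace] Z_stable Z_kstable by blast
qed

lemma irrA_AC:
  assumes "irreducible_A sK sA act sV rho kap"
  shows "irreducible_AC sA sV rho"
proof -
  have Zs: "Z = {0}" by (rule irrA(2)[OF assms])
  obtain a v where av: "rho a v \<noteq> 0" using assms by (auto simp: irreducible_A_def)
  have no: "\<And>W. module.subspace sV W \<Longrightarrow> (\<forall>a. \<forall>v\<in>W. rho a v \<in> W) \<Longrightarrow>
      (\<forall>w. \<forall>v\<in>W. kap w v \<in> W) \<Longrightarrow> W = {0} \<or> W = UNIV"
    using assms by (auto simp: irreducible_A_def)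
  have "\<not> (\<exists>W. module.subspace sV W \<and> W \<noteq> {0} \<and> W \<noteq> UNIV \<and> (\<forall>a. \<forall>v\<in>W. rho a v \<in> W))"
  proof
    assume "\<exists>W. module.subspace sV W \<and> W \<noteq> {0} \<and> W \<noteq> UNIV \<and> (\<forall>a. \<forall>v\<in>W. rho a v \<in> W)"
    then obtain W where W: "module.subspace sV W" "W \<noteq> {0}" "W \<noteq> UNIV" "\<forall>a. \<forall>v\<in>W. rho a v \<in> W"
      by blast
    have sub: "Sp W \<subseteq> W" using Sp_sub[OF W(1,4)] .
    have "Sp W = {0} \<or> Sp W = UNIV" using no[OF Sp_subspace] Sp_stable Sp_kstable by blast
    then have "Sp W = {0}" using sub W(3) by blast
    then have "W \<subseteq> Z" using Sp_contains[of _ W] by (auto simp: Z_def)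
    moreover have "0 \<in> W" using W(1) by (simp add: module.subspace_def[OF ms])
    ultimately show False using W(2) Zs by blast
  qed
  then show ?thesis using AC av by (auto simp: irreducible_AC_def)
qed

end


locale acmk = acm sA sV rho
  for sA :: "complex \<Rightarrow> 'a::ring \<Rightarrow> 'a" and sV :: "complex \<Rightarrow> 'v::ab_group_add \<Rightarrow> 'v"
    and rho :: "'a \<Rightarrow> 'v \<Rightarrow> 'v" +
  fixes sK :: "complex \<Rightarrow> 'k::comm_ring_1 \<Rightarrow> 'k" and act :: "'k \<Rightarrow> 'a \<Rightarrow> 'a"
  assumes KA: "k_algebra sK sA act" and IRR: "irreducible_AC sA sV rho"
begin

lemma mact: "module act" using KA by (simp add: k_algebra_def)
lemma act_minus: "act w (- a) = - act w a" by (rule module.scale_minus_right[OF mact])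
lemma act_add_k: "act (w + u) a = act w a + act u a" by (rule module.scale_left_distrib[OF mact])
lemma act_mult_k: "act w (act u a) = act (w * u) a" by (rule module.scale_scale[OF mact])
lemma act_one: "act 1 a = a" by (rule module.scale_one[OF mact])
lemma actm1: "act w (a1 * a2) = act w a1 * a2" using KA unfolding k_algebra_def by blast
lemma actm2: "act w (a1 * a2) = a1 * act w a2" using KA unfolding k_algebra_def by blast
lemma act_sA: "sA c (act w a) = act w (sA c a)" using KA unfolding k_algebra_def by blast
lemma act_sK: "sA c (act w a) = act (sK c w) a" using KA unfolding k_algebra_def by blast

definition kapc :: "'k \<Rightarrow> 'v \<Rightarrow> 'v" where
  "kapc w v = Gs rho (mapA (act w) (SOME xs. v = Gs rho xs))"

lemma zero_case:
  assumes "Gs rho xs = 0"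
  shows "Gs rho (mapA (act w) xs) = 0"
proof -
  let ?u = "Gs rho (mapA (act w) xs)"
  have "rho b ?u = 0" for b
  proof -
    have "rho b ?u = Gs rho (mapA (\<lambda>a. b * act w a) xs)" by (simp add: rho_Gs)
    also have "\<dots> = Gs rho (mapA (\<lambda>a. act w b * a) xs)"
      by (rule arg_cong[where f="Gs rho"], rule mapA_ext) (metis actm1 actm2)
    also have "\<dots> = rho (act w b) (Gs rho xs)" by (simp add: rho_Gs)
    also have "\<dots> = 0" using assms rv_0 by simp
    finally show ?thesis .
  qed
  then have "?u \<in> Z" by (simp add: Z_def)
  then show ?thesis using irrAC(2)[OF IRR] by simp
qed

lemma neg_lemma: "Gs rho (mapA (\<lambda>a. act w (- a)) ys) = - Gs rho (mapA (act w) ys)"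
  by (induction ys) (simp_all add: act_minus ra_minus)

lemma WD:
  assumes "Gs rho xs = Gs rho ys"
  shows "Gs rho (mapA (act w) xs) = Gs rho (mapA (act w) ys)"
proof -
  have "Gs rho (xs @ mapA uminus ys) = 0" using assms by (simp add: Gs_minus)
  from zero_case[OF this, of w] show ?thesis by (simp add: neg_lemma eq_neg_iff_add_eq_0[symmetric])
qed

lemma rep_ex: "\<exists>xs. v = Gs rho xs"
  using irrAC(1)[OF IRR] unfolding Sp_def by blast

lemma key: "v = Gs rho xs \<Longrightarrow> kapc w v = Gs rho (mapA (act w) xs)"
  unfolding kapc_def by (rule WD) (metis (mono_tags) someI_ex rep_ex)

lemma Gs_mapA_add: "(\<And>a. f a = g a + h a) \<Longrightarrow>
    Gs rho (mapA f xs) = Gs rho (mapA g xs) + Gs rho (mapA h xs)"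
  by (induction xs) (simp_all add: ra_add algebra_simps)

lemma kapc_A_module: "A_module sK sA act sV rho kapc"
  unfolding A_module_def
proof (intro conjI allI)
  show "AC_module sA sV rho" by (rule AC)
next
  fix w
  show "Vector_Spaces.linear sV sV (kapc w)"
    unfolding Vector_Spaces.linear_iff
  proof (intro conjI allI vs)
    fix x y
    obtain xs ys where "x = Gs rho xs" "y = Gs rho ys" using rep_ex by blast
    then show "kapc w (x + y) = kapc w x + kapc w y"
      using key[of x xs w] key[of y ys w] key[of "x + y" "xs @ ys" w] by simp
  next
    fix c x
    obtain xs where x: "x = Gs rho xs" using rep_ex by blast
    have "kapc w (sV c x) = Gs rho (mapA (\<lambda>a. act w (sA c a)) xs)"
      using key[of "sV c x" "mapA (sA c) xs" w] x by (simp add: sV_Gs)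
    also have "\<dots> = Gs rho (mapA (\<lambda>a. sA c (act w a)) xs)" by (simp add: act_sA)
    also have "\<dots> = sV c (kapc w x)" using key[OF x, of w] by (simp add: sV_Gs)
    finally show "kapc w (sV c x) = sV c (kapc w x)" .
  qed
next
  fix w u v
  obtain xs where x: "v = Gs rho xs" using rep_ex by blast
  show "kapc (w + u) v = kapc w v + kapc u v"
    using key[OF x] by (simp add: Gs_mapA_add[OF act_add_k])
next
  fix c w v
  obtain xs where x: "v = Gs rho xs" using rep_ex by blast
  show "kapc (sK c w) v = sV c (kapc w v)"
    using key[OF x] by (simp add: sV_Gs act_sK)
next
  fix w u v
  obtain xs where x: "v = Gs rho xs" using rep_ex by blast
  have "kapc u v = Gs rho (mapA (act u) xs)" using key[OF x] .
  then have "kapc w (kapc u v) = Gs rho (mapA (\<lambda>a. act w (act u a)) xs)"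
    using key by simp
  then show "kapc (w * u) v = kapc w (kapc u v)"
    using key[OF x] by (simp add: act_mult_k)
next
  fix v
  obtain xs where x: "v = Gs rho xs" using rep_ex by blast
  have "mapA (act 1) xs = xs" by (simp add: mapA_def act_one)
  then show "kapc 1 v = v" using key[OF x] x by simp
next
  fix w a v
  have r: "rho a v = Gs rho [(a, v)]" by simp
  show 1: "rho (act w a) v = kapc w (rho a v)" using key[OF r] by simp
  obtain xs where x: "v = Gs rho xs" using rep_ex by blast
  have "kapc w (rho a v) = Gs rho (mapA (\<lambda>b. act w (a * b)) xs)"
    using key[of "rho a v" "mapA ((*) a) xs" w] x by (simp add: rho_Gs)
  also have "\<dots> = Gs rho (mapA (\<lambda>b. a * act w b) xs)" by (simp add: actm2)
  also have "\<dots> = rho a (kapc w v)" using key[OF x] by (simp add: rho_Gs)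
  finally show "rho (act w a) v = rho a (kapc w v)" using 1 by simp
qed

lemma kapc_irr: "irreducible_A sK sA act sV rho kapc"
  using IRR kapc_A_module unfolding irreducible_A_def irreducible_AC_def by blast

end


lemma am_intro: "A_module sK sA act sV rho kap \<Longrightarrow> am sA sV rho sK act kap"
  unfolding am_def acm_def am_axioms_def A_module_def by blast

lemma acmk_intro: "k_algebra sK sA act \<Longrightarrow> irreducible_AC sA sV rho \<Longrightarrow> acmk sA sV rho sK act"
  by (simp add: acmk_def acm_def acmk_axioms_def irreducible_AC_def)

lemma intertw:
  fixes sV :: "complex \<Rightarrow> 'v::ab_group_add \<Rightarrow> 'v" and sW :: "complex \<Rightarrow> 'w::ab_group_add \<Rightarrow> 'w"
  assumes "irreducible_A sK sA act sV rhoV kapV" "irreducible_A sK sA act sW rhoW kapW"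
    and T: "Vector_Spaces.linear sV sW T" "\<forall>a v. T (rhoV a v) = rhoW a (T v)"
  shows "T (kapV w v) = kapW w (T v)"
proof -
  interpret V: am sA sV rhoV sK act kapV
    by (rule am_intro) (use assms(1) in \<open>simp add: irreducible_A_def\<close>)
  interpret W: am sA sW rhoW sK act kapW
    by (rule am_intro) (use assms(2) in \<open>simp add: irreducible_A_def\<close>)
  have Tadd: "\<And>x y. T (x + y) = T x + T y" using T(1) unfolding Vector_Spaces.linear_iff by blast
  obtain xs where x: "v = Gs rhoV xs" using V.irrA(1)[OF assms(1)] unfolding V.Sp_def by blast
  have "T (kapV w v) = T (Gs rhoV (mapA (act w) xs))" using x by (simp add: V.kap_Gs)
  also have "\<dots> = Gs (\<lambda>a x. rhoW (act w a) (T x)) xs"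
    by (simp add: addf_Gs[OF Tadd] Gs_mapA T(2))
  also have "\<dots> = Gs (\<lambda>a x. kapW w (rhoW a (T x))) xs" by (simp add: W.ract1)
  also have "\<dots> = kapW w (Gs (\<lambda>a x. rhoW a (T x)) xs)"
    by (rule addf_Gs[OF W.kv_add, symmetric])
  also have "\<dots> = kapW w (T v)" using x by (simp add: addf_Gs[OF Tadd] T(2))
  finally show ?thesis .
qed

theorem corollary3p4:
  fixes sK :: "complex \<Rightarrow> 'k::comm_ring_1 \<Rightarrow> 'k"
    and sA :: "complex \<Rightarrow> 'a::ring \<Rightarrow> 'a"
    and act :: "'k \<Rightarrow> 'a \<Rightarrow> 'a"
  assumes "coordinate_algebra sK"
    and "k_algebra sK sA act"
  shows
    "(\<forall>(sV :: complex \<Rightarrow> 'v::ab_group_add \<Rightarrow> 'v) rho kap.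
        irreducible_A sK sA act sV rho kap \<longrightarrow> irreducible_AC sA sV rho)
     \<and> (\<forall>(sV :: complex \<Rightarrow> 'v \<Rightarrow> 'v) rhoV kapV (sW :: complex \<Rightarrow> 'w::ab_group_add \<Rightarrow> 'w) rhoW kapW.
        irreducible_A sK sA act sV rhoV kapV \<longrightarrow> irreducible_A sK sA act sW rhoW kapW \<longrightarrow>
        equiv_A sV rhoV kapV sW rhoW kapW \<longrightarrow> equiv_AC sV rhoV sW rhoW)
     \<and> (\<forall>(sV :: complex \<Rightarrow> 'v \<Rightarrow> 'v) rhoV kapV (sW :: complex \<Rightarrow> 'w \<Rightarrow> 'w) rhoW kapW.
        irreducible_A sK sA act sV rhoV kapV \<longrightarrow> irreducible_A sK sA act sW rhoW kapW \<longrightarrow>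
        equiv_AC sV rhoV sW rhoW \<longrightarrow> equiv_A sV rhoV kapV sW rhoW kapW)
     \<and> (\<forall>(sV :: complex \<Rightarrow> 'v \<Rightarrow> 'v) rho.
        irreducible_AC sA sV rho \<longrightarrow> (\<exists>kap. irreducible_A sK sA act sV rho kap))"
proof (intro conjI allI impI)
  fix sV :: "complex \<Rightarrow> 'v::ab_group_add \<Rightarrow> 'v" and rho kap
  assume h: "irreducible_A sK sA act sV rho kap"
  interpret am sA sV rho sK act kap
    by (rule am_intro) (use h in \<open>simp add: irreducible_A_def\<close>)
  show "irreducible_AC sA sV rho" by (rule irrA_AC[OF h])
next
  fix sV :: "complex \<Rightarrow> 'v::ab_group_add \<Rightarrow> 'v" and rhoV kapV
    and sW :: "complex \<Rightarrow> 'w::ab_group_add \<Rightarrow> 'w" and rhoW kapW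
  assume "equiv_A sV rhoV kapV sW rhoW kapW"
  then show "equiv_AC sV rhoV sW rhoW" unfolding equiv_A_def equiv_AC_def by blast
next
  fix sV :: "complex \<Rightarrow> 'v::ab_group_add \<Rightarrow> 'v" and rhoV kapV
    and sW :: "complex \<Rightarrow> 'w::ab_group_add \<Rightarrow> 'w" and rhoW kapW
  assume h1: "irreducible_A sK sA act sV rhoV kapV" and h2: "irreducible_A sK sA act sW rhoW kapW"
    and "equiv_AC sV rhoV sW rhoW"
  then obtain T where T: "Vector_Spaces.linear sV sW T" "bij T" "\<forall>a v. T (rhoV a v) = rhoW a (T v)"
    unfolding equiv_AC_def by blast
  show "equiv_A sV rhoV kapV sW rhoW kapW"
    unfolding equiv_A_def using T intertw[OF h1 h2 T(1) T(3)] by blast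
next
  fix sV :: "complex \<Rightarrow> 'v::ab_group_add \<Rightarrow> 'v" and rho
  assume h: "irreducible_AC sA sV rho"
  interpret acmk sA sV rho sK act by (rule acmk_intro[OF assms(2) h])
  show "\<exists>kap. irreducible_A sK sA act sV rho kap" using kapc_irr by blast
qed

end
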